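(* Let $\mathbb{F}$ be a field, let $n\ge 1$, and let $G$ be a finite subgroup of $\mathrm{M}(n,\mathbb{F})$ whose permutation part $\phi(G)$ is a transitive subgroup of $\mathrm{Sym}(n)$. Then $G$ is $\mathrm{M}(n,\mathbb{F})$-conjugate to a subgroup of $\widetilde{\mathrm{M}}(n,\mathbb{F})$.
   Context: $\mathrm{M}(n,\mathbb{F})$ denotes the group of monomial matrices in $\mathrm{GL}(n,\mathbb{F})$; it splits as $\mathrm{D}(n,\mathbb{F})\rtimes \mathrm{P}(n)$, where $\mathrm{D}(n,\mathbb{F})$ is the group of invertible diagonal matrices and $\mathrm{P}(n)$ the group of permutation matrices, identified with $\mathrm{Sym}(n)$ via $\alpha\mapsto[\delta_{i\alpha,j}]_{i,j}$. The map $\phi\colon \mathrm{M}(n,\mathbb{F})\to\mathrm{Sym}(n)$ is $dt\mapsto t$ for $d\in\mathrm{D}(n,\mathbb{F})$, $t\in \mathrm{P}(n)$; $\phi(G)$ is called the permutation part of $G$. $\widetilde{\mathrm{M}}(n,\mathbb{F})$ denotes the group of all $n\times n$ monomial matrices whose non-zero entries are roots of unity in $\mathbb{F}$. *)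

theory Defs
  imports "HOL-Analysis.Analysis"
begin

text \<open>n = CARD('n); matrices over a field 'a are 'a^'n^'n.
  Sym(n) is the set of permutations of UNIV :: 'n set.\<close>

definition perm_mat :: "('n::finite \<Rightarrow> 'n) \<Rightarrow> 'a::semiring_1^'n^'n" where
  "perm_mat \<alpha> = (\<chi> i j. if \<alpha> i = j then 1 else 0)"

definition diag_inv_mat :: "'a::field^'n::finite^'n \<Rightarrow> bool" where
  "diag_inv_mat d \<longleftrightarrow> (\<forall>i j. i \<noteq> j \<longrightarrow> d $ i $ j = 0) \<and> invertible d"

definition monomial_mats :: "('a::field^'n::finite^'n) set" where
  "monomial_mats = {A. \<exists>d t. diag_inv_mat d \<and> t permutes (UNIV::'n set) \<and> A = d ** perm_mat t}"

definition phi :: "'a::field^'n::finite^'n \<Rightarrow> ('n \<Rightarrow> 'n)" where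
  "phi A = (THE t. t permutes (UNIV::'n set) \<and> (\<exists>d. diag_inv_mat d \<and> A = d ** perm_mat t))"

definition monomial_roots_mats :: "('a::field^'n::finite^'n) set" where
  "monomial_roots_mats = {A \<in> monomial_mats.
     \<forall>i j. A $ i $ j \<noteq> 0 \<longrightarrow> (\<exists>k::nat. k > 0 \<and> A $ i $ j ^ k = 1)}"

definition transitive_perms :: "('n::finite \<Rightarrow> 'n) set \<Rightarrow> bool" where
  "transitive_perms S \<longleftrightarrow> (\<forall>i j. \<exists>\<alpha>\<in>S. \<alpha> i = j)"

end

theory Submission
  imports Defs
begin

definition pat :: "('n::finite \<Rightarrow> 'n) \<Rightarrow> 'a::field^'n^'n \<Rightarrow> bool" where
  "pat t A \<longleftrightarrow> (\<forall>i j. A$i$j \<noteq> 0 \<longleftrightarrow> j = t i)"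

lemma row_lemma:
  fixes A :: "'a::field^'n::finite^'n"
  assumes "\<forall>j. j \<noteq> c \<longrightarrow> A$i$j = 0"
  shows "(A ** B)$i$k = A$i$c * B$c$k"
proof -
  have "(A ** B)$i$k = (\<Sum>l\<in>UNIV. A$i$l * B$l$k)"
    by (simp add: matrix_matrix_mult_def)
  also have "\<dots> = (\<Sum>l\<in>UNIV. if l = c then A$i$c * B$c$k else 0)"
    by (rule sum.cong) (use assms in auto)
  also have "\<dots> = A$i$c * B$c$k" by simp
  finally show ?thesis .
qed

lemma col_lemma:
  fixes A :: "'a::field^'n::finite^'n"
  assumes "\<forall>l. l \<noteq> c \<longrightarrow> B$l$k = 0"
  shows "(A ** B)$i$k = A$i$c * B$c$k"
proof -
  have "(A ** B)$i$k = (\<Sum>l\<in>UNIV. A$i$l * B$l$k)"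
    by (simp add: matrix_matrix_mult_def)
  also have "\<dots> = (\<Sum>l\<in>UNIV. if l = c then A$i$c * B$c$k else 0)"
    by (rule sum.cong) (use assms in auto)
  also have "\<dots> = A$i$c * B$c$k" by simp
  finally show ?thesis .
qed

lemma diag_nz:
  fixes d :: "'a::field^'n::finite^'n"
  assumes "diag_inv_mat d"
  shows "d$i$i \<noteq> 0"
proof -
  obtain d' where "d ** d' = mat 1" using assms unfolding diag_inv_mat_def invertible_def by blast
  then have "(d ** d')$i$i = 1" by (simp add: mat_def)
  moreover have "(d ** d')$i$i = d$i$i * d'$i$i"
    by (rule row_lemma) (use assms in \<open>auto simp: diag_inv_mat_def\<close>)
  ultimately show ?thesis by auto
qed

lemma dp_entry:
  fixes d :: "'a::field^'n::finite^'n"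
  assumes "diag_inv_mat d"
  shows "(d ** perm_mat t)$i$j = (if t i = j then d$i$i else 0)"
proof -
  have "(d ** perm_mat t)$i$j = d$i$i * perm_mat t$i$j"
    by (rule row_lemma) (use assms in \<open>auto simp: diag_inv_mat_def\<close>)
  then show ?thesis by (simp add: perm_mat_def)
qed

lemma dp_pat:
  fixes d :: "'a::field^'n::finite^'n"
  assumes "diag_inv_mat d"
  shows "pat t (d ** perm_mat t)"
  using dp_entry[OF assms] diag_nz[OF assms] unfolding pat_def by auto

lemma pat_unique:
  assumes "pat t A" "pat s A" shows "t = s"
proof
  fix i show "t i = s i" using assms unfolding pat_def by metis
qed

lemma mono_iff:
  fixes A :: "'a::field^'n::finite^'n"
  shows "A \<in> monomial_mats \<longleftrightarrow> (\<exists>t. t permutes UNIV \<and> pat t A)"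
proof
  assume "A \<in> monomial_mats"
  then show "\<exists>t. t permutes UNIV \<and> pat t A"
    unfolding monomial_mats_def using dp_pat by blast
next
  assume "\<exists>t. t permutes UNIV \<and> pat t A"
  then obtain t where t: "t permutes UNIV" "pat t A" by blast
  define d :: "'a^'n^'n" where "d = (\<chi> i j. if i = j then A$i$(t i) else 0)"
  define d' :: "'a^'n^'n" where "d' = (\<chi> i j. if i = j then inverse (A$i$(t i)) else 0)"
  have nz: "A$i$(t i) \<noteq> 0" for i using t(2) unfolding pat_def by auto
  have "d ** d' = mat 1"
  proof -
    have "(d ** d')$i$k = (mat 1 :: 'a^'n^'n)$i$k" for i k
      by (subst row_lemma[where c=i]) (auto simp: d_def d'_def mat_def nz)
    then show ?thesis by (simp add: vec_eq_iff)
  qed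
  moreover have "d' ** d = mat 1"
  proof -
    have "(d' ** d)$i$k = (mat 1 :: 'a^'n^'n)$i$k" for i k
      by (subst row_lemma[where c=i]) (auto simp: d_def d'_def mat_def nz)
    then show ?thesis by (simp add: vec_eq_iff)
  qed
  ultimately have dd: "diag_inv_mat d"
    unfolding diag_inv_mat_def invertible_def by (auto simp: d_def)
  have "A = d ** perm_mat t"
  proof -
    have "A$i$j = (d ** perm_mat t)$i$j" for i j
      using t(2) unfolding dp_entry[OF dd] pat_def by (auto simp: d_def; metis)
    then show ?thesis by (simp add: vec_eq_iff)
  qed
  then show "A \<in> monomial_mats" unfolding monomial_mats_def using dd t(1) by blast
qed

lemma phi_pat:
  fixes A :: "'a::field^'n::finite^'n"
  assumes "A \<in> monomial_mats"
  shows "phi A permutes UNIV \<and> pat (phi A) A"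
proof -
  obtain d t where dt: "diag_inv_mat d" "t permutes UNIV" "A = d ** perm_mat t"
    using assms unfolding monomial_mats_def by blast
  have "phi A = t"
    unfolding phi_def
  proof (rule the_equality)
    show "t permutes UNIV \<and> (\<exists>d. diag_inv_mat d \<and> A = d ** perm_mat t)" using dt by blast
  next
    fix s assume "s permutes UNIV \<and> (\<exists>d. diag_inv_mat d \<and> A = d ** perm_mat s)"
    then obtain e where "diag_inv_mat e" "A = e ** perm_mat s" by blast
    then have "pat s A" using dp_pat by metis
    moreover have "pat t A" using dt dp_pat by metis
    ultimately show "s = t" using pat_unique by metis
  qed
  then show ?thesis using dt dp_pat by metis
qed

lemma mono_invertible:
  fixes A :: "'a::field^'n::finite^'n"
  assumes "A \<in> monomial_mats"
  shows "invertible A"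
proof -
  obtain d t where dt: "diag_inv_mat d" "t permutes UNIV" "A = d ** perm_mat t"
    using assms unfolding monomial_mats_def by blast
  have "invertible (perm_mat t :: 'a^'n^'n)"
  proof -
    have a: "perm_mat t ** perm_mat (inv t) = (mat 1 :: 'a^'n^'n)"
    proof -
      have "(perm_mat t ** perm_mat (inv t))$i$k = (mat 1 :: 'a^'n^'n)$i$k" for i k
        by (subst row_lemma[where c="t i"])
          (use dt(2) in \<open>auto simp: perm_mat_def mat_def permutes_inverses\<close>)
      then show ?thesis by (simp add: vec_eq_iff)
    qed
    have b: "perm_mat (inv t) ** perm_mat t = (mat 1 :: 'a^'n^'n)"
    proof -
      have "(perm_mat (inv t) ** perm_mat t)$i$k = (mat 1 :: 'a^'n^'n)$i$k" for i k
        by (subst row_lemma[where c="inv t i"])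
          (use dt(2) in \<open>auto simp: perm_mat_def mat_def permutes_inverses\<close>)
      then show ?thesis by (simp add: vec_eq_iff)
    qed
    show ?thesis unfolding invertible_def using a b by blast
  qed
  then show ?thesis using dt invertible_mult diag_inv_mat_def by metis
qed

lemma root_lemma:
  fixes G :: "('a::field ^ 'n::finite ^ 'n) set"
  assumes "finite G" "mat 1 \<in> G" "\<forall>a\<in>G. \<forall>b\<in>G. a ** b \<in> G"
    and "k \<in> G" "\<forall>l. l \<noteq> i0 \<longrightarrow> k$i0$l = 0" "k$i0$i0 \<noteq> 0"
  shows "\<exists>m::nat. m > 0 \<and> (k$i0$i0)^m = 1"
proof -
  define e where "e = k$i0$i0"
  define pw where "pw m = ((\<lambda>M. k ** M) ^^ m) (mat 1)" for m
  have inG: "pw m \<in> G" for m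
    by (induction m) (use assms in \<open>auto simp: pw_def\<close>)
  have ent: "(pw m)$i0$j = (if j = i0 then e^m else 0)" for m j
  proof (induction m arbitrary: j)
    case 0 then show ?case by (simp add: pw_def mat_def)
  next
    case (Suc m)
    have "(pw (Suc m))$i0$j = (k ** pw m)$i0$j" by (simp add: pw_def)
    also have "\<dots> = e * (pw m)$i0$j" unfolding e_def by (rule row_lemma) (use assms in auto)
    finally show ?case using Suc by simp
  qed
  have "\<not> inj pw"
  proof
    assume "inj pw"
    then have "infinite (range pw)" using finite_imageD by blast
    moreover have "range pw \<subseteq> G" using inG by auto
    ultimately show False using assms(1) finite_subset by blast
  qed
  then obtain a b where ab: "a \<noteq> b" "pw a = pw b" unfolding inj_def by blast
  then have "e^a = e^b" using ent[of a i0] ent[of b i0] by simp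
  have e0: "e \<noteq> 0" using assms e_def by simp
  have main: "e^x = e^y \<Longrightarrow> x < y \<Longrightarrow> e^(y-x) = 1" for x y
  proof -
    assume "e^x = e^y" "x < y"
    have "e^x * e^(y-x) = e^y" using \<open>x < y\<close> by (simp add: power_add[symmetric])
    then have "e^x * e^(y-x) = e^x * 1" using \<open>e^x = e^y\<close> by simp
    then show ?thesis using e0 by simp
  qed
  show ?thesis
  proof (cases "a < b")
    case True then show ?thesis using main \<open>e^a = e^b\<close> e_def by (metis zero_less_diff)
  next
    case False then have "b < a" using ab by simp
    then show ?thesis using main \<open>e^a = e^b\<close> e_def by (metis zero_less_diff)
  qed
qed


theorem lemma2p4:
  fixes G :: "('a::field ^ 'n::finite ^ 'n) set"
  assumes "finite G"
    and "G \<subseteq> monomial_mats"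
    and "mat 1 \<in> G"
    and "\<forall>a\<in>G. \<forall>b\<in>G. a ** b \<in> G"
    and "\<forall>a\<in>G. matrix_inv a \<in> G"
    and "transitive_perms (phi ` G)"
  shows "\<exists>P\<in>monomial_mats. \<forall>g\<in>G. matrix_inv P ** g ** P \<in> monomial_roots_mats"
proof -
  define i0 :: 'n where "i0 = undefined"
  have "\<forall>j. \<exists>g\<in>G. phi g i0 = j" using assms(6) unfolding transitive_perms_def by blast
  then obtain h where h: "\<And>j. h j \<in> G" "\<And>j. phi (h j) i0 = j" by metis
  have hpat: "pat (phi (h j)) (h j)" for j using phi_pat h(1) assms(2) by blast
  define c where "c j = h j $ i0 $ j" for j
  have cnz: "c j \<noteq> 0" for j using hpat[of j] h(2)[of j] unfolding pat_def c_def by metis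
  have hrow: "\<forall>l. l \<noteq> j \<longrightarrow> h j $ i0 $ l = 0" for j using hpat[of j] h(2)[of j] unfolding pat_def by metis
  define D :: "'a^'n^'n" where "D = (\<chi> i j. if i = j then inverse (c i) else 0)"
  define Di :: "'a^'n^'n" where "Di = (\<chi> i j. if i = j then c i else 0)"
  have DDi: "D ** Di = mat 1"
  proof -
    have "(D ** Di)$i$k = (mat 1 :: 'a^'n^'n)$i$k" for i k
      by (subst row_lemma[where c=i]) (auto simp: D_def Di_def mat_def cnz)
    then show ?thesis by (simp add: vec_eq_iff)
  qed
  have DiD: "Di ** D = mat 1"
  proof -
    have "(Di ** D)$i$k = (mat 1 :: 'a^'n^'n)$i$k" for i k
      by (subst row_lemma[where c=i]) (auto simp: D_def Di_def mat_def cnz)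
    then show ?thesis by (simp add: vec_eq_iff)
  qed
  have invD: "matrix_inv D = Di"
  proof -
    have "D ** matrix_inv D = mat 1 \<and> matrix_inv D ** D = mat 1"
      unfolding matrix_inv_def by (rule someI[of _ Di]) (use DDi DiD in blast)
    then have "Di ** (D ** matrix_inv D) = Di" by (simp add: matrix_mul_rid)
    then show ?thesis by (simp add: matrix_mul_assoc DiD matrix_mul_lid)
  qed
  have "pat id D" unfolding pat_def by (auto simp: D_def cnz)
  then have Dm: "D \<in> monomial_mats" using mono_iff permutes_id by blast
  show ?thesis
  proof (intro bexI[OF _ Dm] ballI)
    fix g assume gG: "g \<in> G"
    define t where "t = phi g"
    have gpat: "t permutes UNIV" "pat t g" using phi_pat gG assms(2) t_def by blast+
    define M where "M = matrix_inv D ** g ** D"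
    have Ment: "M$i$k = c i * g$i$k * inverse (c k)" for i k
    proof -
      have "M$i$k = (Di ** g)$i$k * D$k$k" unfolding M_def invD
        by (rule col_lemma) (auto simp: D_def)
      also have "(Di ** g)$i$k = Di$i$i * g$i$k" by (rule row_lemma) (auto simp: Di_def)
      finally show ?thesis by (simp add: D_def Di_def)
    qed
    have Mpat: "pat t M" using gpat(2) unfolding pat_def Ment by (simp add: cnz)
    have MM: "M \<in> monomial_mats" using mono_iff Mpat gpat(1) by blast
    have roots: "\<exists>m::nat. m > 0 \<and> M$i$j ^ m = 1" if nz: "M$i$j \<noteq> 0" for i j
    proof -
      have j: "j = t i" using Mpat nz unfolding pat_def by blast
      define u where "u = h (t i)"
      have uG: "u \<in> G" using h(1) u_def by simp
      define ui where "ui = matrix_inv u"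
      have uiG: "ui \<in> G" using assms(5) uG ui_def by simp
      have "invertible u" using mono_invertible uG assms(2) by blast
      then have "u ** ui = mat 1 \<and> ui ** u = mat 1"
        unfolding ui_def matrix_inv_def invertible_def by (rule someI_ex)
      then have "(u ** ui)$i0$i0 = 1" by (simp add: mat_def)
      moreover have "(u ** ui)$i0$i0 = c (t i) * ui$(t i)$i0"
        unfolding u_def c_def by (rule row_lemma) (use hrow in auto)
      ultimately have cu: "c (t i) * ui$(t i)$i0 = 1" by simp
      have uipat: "pat (phi ui) ui" using phi_pat uiG assms(2) by blast
      have "ui$(t i)$i0 \<noteq> 0" using cu by auto
      then have uirow: "\<forall>l. l \<noteq> i0 \<longrightarrow> ui$(t i)$l = 0" using uipat unfolding pat_def by metis
      define k where "k = (h i ** g) ** ui"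
      have kG: "k \<in> G" unfolding k_def using assms(4) h(1) gG uiG by blast
      have hg: "(h i ** g)$i0$l = c i * g$i$l" for l
        unfolding c_def by (rule row_lemma) (use hrow in auto)
      have grow: "\<forall>l. l \<noteq> t i \<longrightarrow> (h i ** g)$i0$l = 0"
        using gpat(2) unfolding hg pat_def by auto
      have kent: "k$i0$l = c i * g$i$(t i) * ui$(t i)$l" for l
        unfolding k_def by (subst row_lemma[where c="t i"]) (use grow hg in auto)
      have krow: "\<forall>l. l \<noteq> i0 \<longrightarrow> k$i0$l = 0" using kent uirow by simp
      have "ui$(t i)$i0 = inverse (c (t i))" using cu cnz by (simp add: field_simps)
      then have kM: "k$i0$i0 = M$i$j" using kent[of i0] Ment[of i j] j by simp
      then have "k$i0$i0 \<noteq> 0" using nz by simp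
      then show ?thesis using root_lemma[OF assms(1) assms(3) assms(4) kG krow] kM by simp
    qed
    show "matrix_inv D ** g ** D \<in> monomial_roots_mats"
      unfolding monomial_roots_mats_def using MM roots M_def by blast
  qed
qed

end
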